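(* Let $(U(n))_{n\geqslant 0}$ be an arithmetic progression of positive integers, $U(n)=U(0)+nd$ with $d$ an integer, and let $S(n)=\overline{U(0)U(1)\cdots U(n-1)U(n)U(n-1)\cdots U(1)U(0)}$ for $n\geqslant 0$ (so $S(0)=U(0)$; e.g. for $U(n)=n+1$ this is $1,121,12321,\ldots$). Let $l$ be a positive integer. Then for every $n\geqslant 0$ such that $U(n)$, $U(n+1)$, $U(n+2)$, $U(n+3)$ all have exactly $l$ decimal digits, $$S(n+3) - \left(1+10^l+10^{2l}\right) S(n+2) + \left(10^l+10^{2l}+10^{3l}\right) S(n+1) - 10^{3l}\, S(n) = 0.$$
   Context: For positive integers $a_0,\ldots,a_k$, $\overline{a_0a_1\cdots a_k}$ denotes the integer whose decimal expansion is the decimal expansion of $a_0$ followed by that of $a_1$, ..., followed by that of $a_k$. The sequence $S$ is the concatenation of the right-concatenation $\overline{U(0)\cdots U(n)}$ with the left-concatenation $\overline{U(n-1)\cdots U(0)}$. *)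

theory Defs
  imports Main
begin

(* number of decimal digits of a positive integer (ndigits 0 = 0 by convention; only used on positives) *)
fun ndigits :: "nat \<Rightarrow> nat" where
  "ndigits n = (if n < 10 then (if n = 0 then 0 else 1) else Suc (ndigits (n div 10)))"

definition dconcat :: "nat \<Rightarrow> nat \<Rightarrow> nat" where
  "dconcat a b = a * 10 ^ ndigits b + b"

definition dconcat_list :: "nat list \<Rightarrow> nat" where
  "dconcat_list xs = foldl dconcat 0 xs"

definition S_seq :: "(nat \<Rightarrow> nat) \<Rightarrow> nat \<Rightarrow> nat" where
  "S_seq U n = dconcat_list (map U [0..<Suc n] @ rev (map U [0..<n]))"

end

theory Submission
  imports Defs
begin

declare ndigits.simps[simp del]

lemma dconcat_0: "dconcat 0 y = y" by (simp add: dconcat_def)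

lemma sl_rev[simp]: "sum_list (map ndigits (rev xs)) = sum_list (map ndigits xs)"
  by (metis rev_map sum_list_rev)

lemma foldl_dc: "foldl dconcat a ys = a * 10 ^ sum_list (map ndigits ys) + foldl dconcat 0 ys"
proof (induction ys arbitrary: a)
  case Nil then show ?case by simp
next
  case (Cons y ys)
  have "foldl dconcat a (y # ys) = foldl dconcat (dconcat a y) ys" by simp
  also have "\<dots> = dconcat a y * 10 ^ sum_list (map ndigits ys) + foldl dconcat 0 ys"
    using Cons by blast
  also have "foldl dconcat 0 (y # ys) = y * 10 ^ sum_list (map ndigits ys) + foldl dconcat 0 ys"
    using Cons[of "dconcat 0 y"] by (simp add: dconcat_0)
  moreover have "dconcat a y = a * 10 ^ ndigits y + y" by (simp add: dconcat_def)
  ultimately show ?case by (simp add: algebra_simps power_add)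
qed

lemma dl_append: "dconcat_list (xs @ ys) = dconcat_list xs * 10 ^ sum_list (map ndigits ys) + dconcat_list ys"
  unfolding dconcat_list_def by (simp add: foldl_dc[of "foldl dconcat 0 xs"])

definition AA :: "(nat \<Rightarrow> nat) \<Rightarrow> nat \<Rightarrow> nat" where
  "AA U m = dconcat_list (map U [0..<Suc m])"
definition BB :: "(nat \<Rightarrow> nat) \<Rightarrow> nat \<Rightarrow> nat" where
  "BB U m = dconcat_list (rev (map U [0..<m]))"
definition DD :: "(nat \<Rightarrow> nat) \<Rightarrow> nat \<Rightarrow> nat" where
  "DD U m = sum_list (map ndigits (map U [0..<m]))"

lemma S_eq: "S_seq U m = AA U m * 10 ^ DD U m + BB U m"
  unfolding S_seq_def AA_def BB_def DD_def dl_append by (simp add: sum_list_rev)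

lemma AA_Suc: "AA U (Suc m) = AA U m * 10 ^ ndigits (U (Suc m)) + U (Suc m)"
proof -
  have "map U [0..<Suc (Suc m)] = map U [0..<Suc m] @ [U (Suc m)]" by simp
  then show ?thesis unfolding AA_def
    by (simp only: dl_append) (simp add: dconcat_list_def dconcat_def)
qed

lemma BB_Suc: "BB U (Suc m) = U m * 10 ^ DD U m + BB U m"
proof -
  have "rev (map U [0..<Suc m]) = [U m] @ rev (map U [0..<m])" by simp
  then show ?thesis unfolding BB_def DD_def
    by (simp only: dl_append) (simp add: dconcat_list_def dconcat_def sum_list_rev)
qed

lemma DD_Suc: "DD U (Suc m) = DD U m + ndigits (U m)"
  unfolding DD_def by simp

theorem lemma3:
  fixes U :: "nat \<Rightarrow> nat" and d :: int and l n :: nat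
  assumes pos: "\<forall>k. U k > 0"
    and arith: "\<forall>k. int (U k) = int (U 0) + int k * d"
    and l_pos: "l > 0"
    and digits: "\<forall>i\<le>3. ndigits (U (n + i)) = l"
  shows "int (S_seq U (n + 3)) - (1 + 10 ^ l + 10 ^ (2 * l)) * int (S_seq U (n + 2))
           + (10 ^ l + 10 ^ (2 * l) + 10 ^ (3 * l)) * int (S_seq U (n + 1))
           - 10 ^ (3 * l) * int (S_seq U n) = 0"
proof -
  have g0: "ndigits (U n) = l" using digits[rule_format, of 0] by simp
  have g1: "ndigits (U (Suc n)) = l" using digits[rule_format, of 1] by simp
  have g2: "ndigits (U (Suc (Suc n))) = l" using digits[rule_format, of 2] by (simp add: numeral_2_eq_2)
  have g3: "ndigits (U (Suc (Suc (Suc n)))) = l" using digits[rule_format, of 3] by (simp add: numeral_3_eq_3)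
  define a where "a = int (AA U n)"
  define b where "b = int (BB U n)"
  define P where "P = (10::int) ^ DD U n"
  define x where "x = (10::int) ^ l"
  define u0 where "u0 = int (U n)"
  define u1 where "u1 = int (U (Suc n))"
  define u2 where "u2 = int (U (Suc (Suc n)))"
  define u3 where "u3 = int (U (Suc (Suc (Suc n))))"
  have e2: "u2 = 2 * u1 - u0" unfolding u0_def u1_def u2_def
    using arith[rule_format, of n] arith[rule_format, of "Suc n"] arith[rule_format, of "Suc (Suc n)"]
    by (simp add: algebra_simps)
  have e3: "u3 = 3 * u1 - 2 * u0" unfolding u0_def u1_def u3_def
    using arith[rule_format, of n] arith[rule_format, of "Suc n"] arith[rule_format, of "Suc (Suc (Suc n))"]
    by (simp add: algebra_simps)
  have x2: "(10::int) ^ (2*l) = x * x" unfolding x_def by (simp add: power_mult_distrib mult_2 power_add)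
  have x3: "(10::int) ^ (3*l) = x * x * x" unfolding x_def
    by (simp add: numeral_3_eq_3 power_add)
  have S0: "int (S_seq U n) = a * P + b" unfolding S_eq a_def b_def P_def by simp
  have S1: "int (S_seq U (n+1)) = (a * x + u1) * P * x + (u0 * P + b)"
    unfolding S_eq a_def b_def P_def x_def u0_def u1_def
    by (simp add: AA_Suc BB_Suc DD_Suc g0 g1 power_add)
  have S2: "int (S_seq U (n+2)) = (a * x * x + u1 * x + u2) * P * x * x + (u1 * P * x + u0 * P + b)"
    unfolding S_eq a_def b_def P_def x_def u0_def u1_def u2_def
    by (simp add: AA_Suc BB_Suc DD_Suc g0 g1 g2 power_add algebra_simps)
  have S3: "int (S_seq U (n+3)) = (a * x * x * x + u1 * x * x + u2 * x + u3) * P * x * x * x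
       + (u2 * P * x * x + u1 * P * x + u0 * P + b)"
    unfolding S_eq a_def b_def P_def x_def u0_def u1_def u2_def u3_def
    by (simp add: AA_Suc BB_Suc DD_Suc g0 g1 g2 g3 power_add numeral_3_eq_3 algebra_simps)
  show ?thesis unfolding S0 S1 S2 S3 x2 x3 e2 e3 x_def[symmetric]
    by (simp add: algebra_simps)
qed

end
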